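(* Let $m\ge1$, $r\ge1$, and let $A_0,\dots,A_r$ be $\mathfrak{gl}_m$-valued functions satisfying the Takiff Poisson relations $\{A_i\overset{\otimes}{,}A_j\}=[\Pi,\mathbb I\otimes A_{i+j}]$ for $i+j\le r$ and $\{A_i\overset{\otimes}{,}A_j\}=0$ for $i+j>r$. For constants $T_{ij}\in\mathbb C$ ($i,j=0,\dots,r$) set $B_i=\sum_{j=0}^rT_{ij}A_j$. Then the $B_i$ satisfy the same relations ($\{B_i\overset{\otimes}{,}B_j\}=[\Pi,\mathbb I\otimes B_{i+j}]$ for $i+j\le r$, $0$ otherwise) if and only if the $T_{ij}$ satisfy $$T_{00}=1;\quad T_{0k}=0\ (k>0);\quad T_{k0}=0\ (k>0);\quad T_{ik}=0\ (k<i);\quad T_{sl}=\sum_{i,j>0,\ i+j=l}T_{pi}T_{mj}\ \text{ for all }p,m>0\text{ with }p+m=s.$$ Moreover, if $\mathcal P\subset\mathbb C[T_{00},\dots,T_{rr}]$ denotes the ideal generated by these equations, there is a ring isomorphism $\mathcal Q:\mathbb C[T_{00},\dots,T_{rr}]/\mathcal P\to\mathbb C[t_1,\dots,t_r]$ with $\mathcal Q(T_{1i})=t_i$ ($i\ge1$) and, for all $k,i$, $\mathcal Q(T_{ki})=\frac1{i!}\frac{d^i}{d\varepsilon^i}P_r(t,\varepsilon)^k\big|_{\varepsilon=0}$, the coefficient of $\varepsilon^i$ in $P_r(t,\varepsilon)^k$, where $P_r(t,\varepsilon)=\sum_{i=1}^r\varepsilon^it_i$.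
   Context: $\{X\overset{\otimes}{,}Y\}=\sum\{X_{ab},Y_{cd}\}E_{ab}\otimes E_{cd}$, and $\Pi=\sum_{a,b}E_{ab}\otimes E_{ba}$ is the permutation operator on $\mathbb C^m\otimes\mathbb C^m$. These relations are the Lie–Poisson bracket on the dual of the Takiff algebra $\mathfrak{gl}_m[z]/z^{r+1}$ for elements $\sum_kA_kz^{-k-1}$. Equivalently, the coefficient of $\varepsilon^i$ in $P_r^k$ is $\sum_{|\alpha|=k,\,w(\alpha)=i}\frac{k!}{\alpha_1!\cdots\alpha_r!}\prod_lt_l^{\alpha_l}$ with $|\alpha|=\sum\alpha_l$, $w(\alpha)=\sum l\alpha_l$. *)

theory Defs
  imports "HOL-Algebra.QuotRing" "HOL-Library.Poly_Mapping"
    "HOL-Computational_Algebra.Polynomial"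
begin

text \<open>A polynomial in variables of type 'v is a finitely supported map from monomials
  (finitely supported exponent vectors 'v =>0 nat) to complex coefficients.
  poly_ring V is the ring C[x_v : v in V]: polynomials all of whose monomials only
  involve variables from V.\<close>

definition poly_ring :: "'v set \<Rightarrow> ((('v \<Rightarrow>\<^sub>0 nat) \<Rightarrow>\<^sub>0 complex)) ring" where
  "poly_ring V = \<lparr>carrier = {p :: (('v \<Rightarrow>\<^sub>0 nat) \<Rightarrow>\<^sub>0 complex). \<forall>\<mu>\<in>Poly_Mapping.keys p. Poly_Mapping.keys \<mu> \<subseteq> V},
                  Group.monoid.mult = (*), Group.monoid.one = 1, Ring.ring.zero = 0, Ring.ring.add = (+)\<rparr>"

definition mvar :: "'v \<Rightarrow> ('v \<Rightarrow>\<^sub>0 nat) \<Rightarrow>\<^sub>0 complex" where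
  "mvar v = Poly_Mapping.single (Poly_Mapping.single v 1) 1"

text \<open>C[T_00,...,T_rr]: variable T_ij is mvar (i,j).\<close>
abbreviation Tring :: "nat \<Rightarrow> (((nat \<times> nat) \<Rightarrow>\<^sub>0 nat) \<Rightarrow>\<^sub>0 complex) ring" where
  "Tring r \<equiv> poly_ring ({0..r} \<times> {0..r})"

text \<open>C[t_1,...,t_r]: variable t_i is mvar i.\<close>
abbreviation tring :: "nat \<Rightarrow> ((nat \<Rightarrow>\<^sub>0 nat) \<Rightarrow>\<^sub>0 complex) ring" where
  "tring r \<equiv> poly_ring {1..r}"

definition Tgens :: "nat \<Rightarrow> (((nat \<times> nat) \<Rightarrow>\<^sub>0 nat) \<Rightarrow>\<^sub>0 complex) set" where
  "Tgens r =
     {mvar (0,0) - 1}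
   \<union> {mvar (0,k) | k. 0 < k \<and> k \<le> r}
   \<union> {mvar (k,0) | k. 0 < k \<and> k \<le> r}
   \<union> {mvar (i,k) | i k. i \<le> r \<and> k < i}
   \<union> {mvar (s,l) - (\<Sum>i\<in>{1..<l}. mvar (p,i) * mvar (q,l-i)) | s l p q.
        s \<le> r \<and> l \<le> r \<and> 0 < p \<and> 0 < q \<and> p + q = s}"

definition Pideal :: "nat \<Rightarrow> (((nat \<times> nat) \<Rightarrow>\<^sub>0 nat) \<Rightarrow>\<^sub>0 complex) set" where
  "Pideal r = genideal (Tring r) (Tgens r)"

definition Pr :: "nat \<Rightarrow> ((nat \<Rightarrow>\<^sub>0 nat) \<Rightarrow>\<^sub>0 complex) poly" where
  "Pr r = (\<Sum>i\<in>{1..r}. Polynomial.monom (mvar i) i)"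

definition Qval :: "nat \<Rightarrow> nat \<Rightarrow> nat \<Rightarrow> (nat \<Rightarrow>\<^sub>0 nat) \<Rightarrow>\<^sub>0 complex" where
  "Qval r k i = Polynomial.coeff (Pr r ^ k) i"

definition T_cond :: "nat \<Rightarrow> (nat \<Rightarrow> nat \<Rightarrow> complex) \<Rightarrow> bool" where
  "T_cond r T \<longleftrightarrow>
     T 0 0 = 1
   \<and> (\<forall>k. 0 < k \<and> k \<le> r \<longrightarrow> T 0 k = 0)
   \<and> (\<forall>k. 0 < k \<and> k \<le> r \<longrightarrow> T k 0 = 0)
   \<and> (\<forall>i k. i \<le> r \<and> k < i \<longrightarrow> T i k = 0)
   \<and> (\<forall>s l p q. s \<le> r \<and> l \<le> r \<and> 0 < p \<and> 0 < q \<and> p + q = s \<longrightarrow>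
        T s l = (\<Sum>i\<in>{1..<l}. T p i * T q (l - i)))"

text \<open>A linear function on the dual of the Takiff algebra is represented by its coefficient
  vector w.r.t. the coordinate functions (A_k)_{ab} (k = 0..r, a,b < m):
  f k a b is the coefficient of (A_k)_{ab}.\<close>
type_synonym lin = "nat \<Rightarrow> nat \<Rightarrow> nat \<Rightarrow> complex"

definition Acoord :: "nat \<Rightarrow> nat \<Rightarrow> nat \<Rightarrow> lin" where
  "Acoord k a b = (\<lambda>k' a' b'. if k' = k \<and> a' = a \<and> b' = b then 1 else 0)"

text \<open>Coefficient of E_ab (x) E_cd in [Pi, 1 (x) X] for a matrix X of linear functions:
  delta_bc X_ad - delta_ad X_cb.\<close>
definition comm_Pi_entry :: "(nat \<Rightarrow> nat \<Rightarrow> lin) \<Rightarrow> nat \<Rightarrow> nat \<Rightarrow> nat \<Rightarrow> nat \<Rightarrow> lin" where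
  "comm_Pi_entry X a b c d =
     (\<lambda>k' a' b'. (if b = c then X a d k' a' b' else 0) - (if a = d then X c b k' a' b' else 0))"

definition lp_gen :: "nat \<Rightarrow> nat \<Rightarrow> nat \<Rightarrow> nat \<Rightarrow> nat \<Rightarrow> nat \<Rightarrow> nat \<Rightarrow> lin" where
  "lp_gen r i j a b c d =
     (if i + j \<le> r then comm_Pi_entry (Acoord (i + j)) a b c d else (\<lambda>_ _ _. 0))"

definition lp_bracket :: "nat \<Rightarrow> nat \<Rightarrow> lin \<Rightarrow> lin \<Rightarrow> lin" where
  "lp_bracket r m X Y = (\<lambda>k' a' b'.
     \<Sum>i\<le>r. \<Sum>j\<le>r. \<Sum>a<m. \<Sum>b<m. \<Sum>c<m. \<Sum>d<m.
        X i a b * Y j c d * lp_gen r i j a b c d k' a' b')"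

definition takiff_rel :: "nat \<Rightarrow> nat \<Rightarrow> (nat \<Rightarrow> nat \<Rightarrow> nat \<Rightarrow> lin) \<Rightarrow> bool" where
  "takiff_rel r m B \<longleftrightarrow>
     (\<forall>i\<le>r. \<forall>j\<le>r. \<forall>a<m. \<forall>b<m. \<forall>c<m. \<forall>d<m.
        lp_bracket r m (B i a b) (B j c d) =
          (if i + j \<le> r then comm_Pi_entry (B (i + j)) a b c d else (\<lambda>_ _ _. 0)))"

definition Bmat :: "nat \<Rightarrow> (nat \<Rightarrow> nat \<Rightarrow> complex) \<Rightarrow> nat \<Rightarrow> nat \<Rightarrow> nat \<Rightarrow> lin" where
  "Bmat r T i a b = (\<lambda>k' a' b'. \<Sum>j\<le>r. T i j * Acoord j a b k' a' b')"

end

theory Submission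
  imports Defs
begin


type_synonym 'v mp = "('v \<Rightarrow>\<^sub>0 nat) \<Rightarrow>\<^sub>0 complex"

definition mon :: "('v \<Rightarrow> 'w mp) \<Rightarrow> ('v \<Rightarrow>\<^sub>0 nat) \<Rightarrow> 'w mp" where
  "mon f \<mu> = (\<Prod>v\<in>Poly_Mapping.keys \<mu>. f v ^ Poly_Mapping.lookup \<mu> v)"

definition ev :: "('v \<Rightarrow> 'w mp) \<Rightarrow> 'v mp \<Rightarrow> 'w mp" where
  "ev f p = (\<Sum>\<mu>\<in>Poly_Mapping.keys p. Poly_Mapping.single 0 (Poly_Mapping.lookup p \<mu>) * mon f \<mu>)"

lemma mon_superset:
  assumes "finite S" "Poly_Mapping.keys \<mu> \<subseteq> S"
  shows "mon f \<mu> = (\<Prod>v\<in>S. f v ^ Poly_Mapping.lookup \<mu> v)"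
  unfolding mon_def
  by (rule prod.mono_neutral_left) (use assms in \<open>auto simp: in_keys_iff\<close>)

lemma mon_add: "mon f (\<mu> + \<nu>) = mon f \<mu> * mon f \<nu>"
proof -
  let ?S = "Poly_Mapping.keys \<mu> \<union> Poly_Mapping.keys \<nu>"
  have "mon f (\<mu> + \<nu>) = (\<Prod>v\<in>?S. f v ^ Poly_Mapping.lookup (\<mu>+\<nu>) v)"
    by (rule mon_superset) (use keys_add[of \<mu> \<nu>] in auto)
  also have "\<dots> = (\<Prod>v\<in>?S. f v ^ Poly_Mapping.lookup \<mu> v) * (\<Prod>v\<in>?S. f v ^ Poly_Mapping.lookup \<nu> v)"
    by (simp add: lookup_add power_add prod.distrib)
  also have "\<dots> = mon f \<mu> * mon f \<nu>"
    by (simp add: mon_superset[symmetric])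
  finally show ?thesis .
qed

lemma mon_zero [simp]: "mon f 0 = 1"
  by (simp add: mon_def)

lemma ev_superset:
  assumes "finite S" "Poly_Mapping.keys p \<subseteq> S"
  shows "ev f p = (\<Sum>\<mu>\<in>S. Poly_Mapping.single 0 (Poly_Mapping.lookup p \<mu>) * mon f \<mu>)"
  unfolding ev_def
  by (rule sum.mono_neutral_left) (use assms in \<open>auto simp: in_keys_iff\<close>)

lemma ev_add: "ev f (p + q) = ev f p + ev f q"
proof -
  let ?S = "Poly_Mapping.keys p \<union> Poly_Mapping.keys q"
  have "ev f (p + q) = (\<Sum>\<mu>\<in>?S. Poly_Mapping.single 0 (Poly_Mapping.lookup (p+q) \<mu>) * mon f \<mu>)"
    by (rule ev_superset) (use keys_add[of p q] in auto)
  also have "\<dots> = (\<Sum>\<mu>\<in>?S. Poly_Mapping.single 0 (Poly_Mapping.lookup p \<mu>) * mon f \<mu>)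
     + (\<Sum>\<mu>\<in>?S. Poly_Mapping.single 0 (Poly_Mapping.lookup q \<mu>) * mon f \<mu>)"
    by (simp add: lookup_add single_add distrib_right sum.distrib)
  also have "\<dots> = ev f p + ev f q"
    by (simp add: ev_superset[symmetric])
  finally show ?thesis .
qed

lemma ev_zero [simp]: "ev f 0 = 0"
  by (simp add: ev_def)

lemma ev_single: "ev f (Poly_Mapping.single \<mu> c) = Poly_Mapping.single 0 c * mon f \<mu>"
  by (simp add: ev_def)

lemma ev_uminus: "ev f (- p) = - ev f p"
  using ev_add[of f p "-p"] by (simp add: eq_neg_iff_add_eq_0 add.commute)

lemma ev_diff: "ev f (p - q) = ev f p - ev f q"
  using ev_add[of f p "-q"] ev_uminus[of f q] by simp

lemma ev_sum: "ev f (sum g A) = (\<Sum>a\<in>A. ev f (g a))"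
  by (induction A rule: infinite_finite_induct) (auto simp: ev_add)

lemma mp_expand: "p = (\<Sum>\<mu>\<in>Poly_Mapping.keys p. Poly_Mapping.single \<mu> (Poly_Mapping.lookup p \<mu>))"
  by (rule poly_mapping_eqI) (simp add: lookup_sum lookup_single when_def in_keys_iff)

lemma ev_single_mult: "ev f (Poly_Mapping.single \<mu> a * Poly_Mapping.single \<nu> b) =
   Poly_Mapping.single 0 a * mon f \<mu> * (Poly_Mapping.single 0 b * mon f \<nu>)"
proof -
  have s0: "Poly_Mapping.single 0 (a * b) = Poly_Mapping.single (0::'w \<Rightarrow>\<^sub>0 nat) a * Poly_Mapping.single 0 b"
    by (simp add: mult_single)
  show ?thesis
    by (simp only: mult_single ev_single mon_add) (simp only: s0 mult_ac)
qed

lemma ev_mult: "ev f (p * q) = ev f p * ev f q"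
proof -
  have "ev f (p * q) = ev f ((\<Sum>\<mu>\<in>Poly_Mapping.keys p. Poly_Mapping.single \<mu> (Poly_Mapping.lookup p \<mu>)) *
     (\<Sum>\<nu>\<in>Poly_Mapping.keys q. Poly_Mapping.single \<nu> (Poly_Mapping.lookup q \<nu>)))"
    by (simp only: mp_expand[symmetric])
  also have "\<dots> = (\<Sum>\<mu>\<in>Poly_Mapping.keys p. \<Sum>\<nu>\<in>Poly_Mapping.keys q.
          Poly_Mapping.single 0 (Poly_Mapping.lookup p \<mu>) * mon f \<mu> * (Poly_Mapping.single 0 (Poly_Mapping.lookup q \<nu>) * mon f \<nu>))"
    by (simp only: sum_distrib_left sum_distrib_right ev_sum ev_single_mult) (rule sum.swap)
  also have "\<dots> = ev f p * ev f q"
    by (simp only: ev_def sum_distrib_left sum_distrib_right) (rule sum.swap)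
  finally show ?thesis .
qed

lemma ev_one [simp]: "ev f 1 = 1"
  using ev_single[of f 0 1] by simp

lemma ev_const: "ev f (Poly_Mapping.single 0 c) = Poly_Mapping.single 0 c"
  by (simp add: ev_single)

lemma ev_power: "ev f (p ^ n) = ev f p ^ n"
  by (induction n) (auto simp: ev_mult)

lemma ev_prod: "ev f (prod g A) = (\<Prod>a\<in>A. ev f (g a))"
  by (induction A rule: infinite_finite_induct) (auto simp: ev_mult)

lemma ev_mvar [simp]: "ev f (mvar v) = f v"
  by (simp add: mvar_def ev_single mon_def)

lemma ev_mon: "ev g (mon f \<mu>) = mon (\<lambda>v. ev g (f v)) \<mu>"
  by (simp add: mon_def ev_prod ev_power)

lemma ev_smult: "ev g (Poly_Mapping.single 0 c * x) = Poly_Mapping.single 0 c * ev g x"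
  by (simp add: ev_mult ev_const)

lemma ev_comp: "ev g (ev f p) = ev (\<lambda>v. ev g (f v)) p"
proof -
  have "ev g (ev f p) = (\<Sum>\<mu>\<in>Poly_Mapping.keys p. Poly_Mapping.single 0 (Poly_Mapping.lookup p \<mu>) * ev g (mon f \<mu>))"
    by (simp only: ev_def[of f p] ev_sum ev_smult)
  then show ?thesis by (simp add: ev_mon ev_def[of "\<lambda>v. ev g (f v)" p])
qed

definition vars :: "'v mp \<Rightarrow> 'v set" where
  "vars p = (\<Union>\<mu>\<in>Poly_Mapping.keys p. Poly_Mapping.keys \<mu>)"

lemma ev_cong:
  assumes "\<And>v. v \<in> vars p \<Longrightarrow> f v = g v"
  shows "ev f p = ev g p"
  unfolding ev_def mon_def
  by (intro sum.cong refl arg_cong2[where f="(*)"] prod.cong) (metis UN_I assms vars_def)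

lemma mvar_power: "mvar v ^ n = Poly_Mapping.single (Poly_Mapping.single v n) 1"
  by (induction n) (simp_all add: mvar_def mult_single single_add[symmetric] add.commute)

lemma prod_single1: "(\<Prod>a\<in>A. Poly_Mapping.single (g a) (1::complex)) = Poly_Mapping.single (\<Sum>a\<in>A. g a) 1"
  by (induction A rule: infinite_finite_induct) (simp_all add: mult_single)

lemma mon_mvar: "mon mvar \<mu> = Poly_Mapping.single \<mu> 1"
  by (simp add: mon_def mvar_power prod_single1 mp_expand[symmetric])

lemma ev_mvar_id: "ev mvar p = p"
  by (simp add: ev_def mon_mvar mult_single mp_expand[symmetric])



lemma poly_ring_carrier: "carrier (poly_ring V) = {p. vars p \<subseteq> V}"
  by (auto simp: poly_ring_def vars_def)
lemma poly_ring_simps [simp]: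
  "Group.monoid.mult (poly_ring V) = (*)" "Group.monoid.one (poly_ring V) = 1" "Ring.ring.zero (poly_ring V) = 0" "Ring.ring.add (poly_ring V) = (+)"
  by (simp_all add: poly_ring_def)

lemma keys_monom_add: "Poly_Mapping.keys ((\<mu>::'v \<Rightarrow>\<^sub>0 nat) + \<nu>) \<subseteq> Poly_Mapping.keys \<mu> \<union> Poly_Mapping.keys \<nu>"
  by (rule keys_add)

lemma vars_add: "vars (p + q) \<subseteq> vars p \<union> vars q"
  unfolding vars_def using keys_add[of p q] by blast

lemma vars_mult: "vars (p * q) \<subseteq> vars p \<union> vars q"
proof
  fix v assume "v \<in> vars (p * q)"
  then obtain \<mu> where "\<mu> \<in> Poly_Mapping.keys (p*q)" "v \<in> Poly_Mapping.keys \<mu>" by (auto simp: vars_def)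
  then obtain a b where "a \<in> Poly_Mapping.keys p" "b \<in> Poly_Mapping.keys q" "v \<in> Poly_Mapping.keys (a + b)"
    using keys_mult[of p q] by blast
  then show "v \<in> vars p \<union> vars q" using keys_add[of a b] by (auto simp: vars_def)
qed

lemma keys_uminus_mp: "Poly_Mapping.keys (- p) = Poly_Mapping.keys (p :: 'v mp)"
  by (auto simp: in_keys_iff)

lemma vars_uminus [simp]: "vars (- p) = vars p"
  by (simp add: vars_def keys_uminus_mp)

lemma vars_diff: "vars (p - q) \<subseteq> vars p \<union> vars q"
  using vars_add[of p "-q"] by simp

lemma vars_zero [simp]: "vars 0 = {}" and vars_one [simp]: "vars 1 = {}"
  by (simp_all add: vars_def)

lemma vars_const [simp]: "vars (Poly_Mapping.single 0 c) = {}"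
  by (simp add: vars_def)

lemma vars_mvar [simp]: "vars (mvar v) = {v}"
  by (simp add: vars_def mvar_def)

lemma vars_smult: "vars (Poly_Mapping.single 0 c * q) \<subseteq> vars q"
  using vars_mult[of "Poly_Mapping.single 0 c" q] by simp

lemma vars_sum: "vars (sum f A) \<subseteq> (\<Union>a\<in>A. vars (f a))"
proof (induction A rule: infinite_finite_induct)
  case (insert x F)
  then show ?case using vars_add[of "f x" "sum f F"] by auto
qed auto

lemma vars_prod: "vars (prod f A) \<subseteq> (\<Union>a\<in>A. vars (f a))"
proof (induction A rule: infinite_finite_induct)
  case (insert x F)
  then show ?case using vars_mult[of "f x" "prod f F"] by auto
qed auto

lemma vars_power: "vars (p ^ n) \<subseteq> vars p"
proof (induction n)
  case (Suc n)
  then show ?case using vars_mult[of p "p ^ n"] by auto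
qed auto

lemma vars_mon: "vars (mon f \<mu>) \<subseteq> (\<Union>v\<in>Poly_Mapping.keys \<mu>. vars (f v))"
proof -
  have "vars (mon f \<mu>) \<subseteq> (\<Union>v\<in>Poly_Mapping.keys \<mu>. vars (f v ^ Poly_Mapping.lookup \<mu> v))"
    unfolding mon_def by (rule vars_prod)
  also have "\<dots> \<subseteq> (\<Union>v\<in>Poly_Mapping.keys \<mu>. vars (f v))"
    by (intro UN_mono subset_refl vars_power)
  finally show ?thesis .
qed

lemma vars_ev: "vars (ev f p) \<subseteq> (\<Union>v\<in>vars p. vars (f v))"
proof -
  have "vars (ev f p) \<subseteq> (\<Union>\<mu>\<in>Poly_Mapping.keys p. vars (Poly_Mapping.single 0 (Poly_Mapping.lookup p \<mu>) * mon f \<mu>))"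
    unfolding ev_def by (rule vars_sum)
  also have "\<dots> \<subseteq> (\<Union>\<mu>\<in>Poly_Mapping.keys p. vars (mon f \<mu>))"
    by (intro UN_mono subset_refl vars_smult)
  also have "\<dots> \<subseteq> (\<Union>v\<in>vars p. vars (f v))"
  proof (rule UN_least)
    fix \<mu> assume "\<mu> \<in> Poly_Mapping.keys p"
    then have "Poly_Mapping.keys \<mu> \<subseteq> vars p" by (auto simp: vars_def)
    then show "vars (mon f \<mu>) \<subseteq> (\<Union>v\<in>vars p. vars (f v))" using vars_mon[of f \<mu>] by blast
  qed
  finally show ?thesis .
qed

lemma vars_add_le: "vars p \<subseteq> V \<Longrightarrow> vars q \<subseteq> V \<Longrightarrow> vars (p + q) \<subseteq> V"
  using vars_add[of p q] by (rule subset_trans) simp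
lemma vars_mult_le: "vars p \<subseteq> V \<Longrightarrow> vars q \<subseteq> V \<Longrightarrow> vars (p * q) \<subseteq> V"
  using vars_mult[of p q] by (rule subset_trans) simp

lemma cring_poly_ring: "cring (poly_ring V)"
proof (rule cringI)
  show "abelian_group (poly_ring V)"
    apply (rule abelian_groupI)
    apply (simp_all add: poly_ring_carrier vars_add_le add.assoc)
    apply (rule_tac x="-x" in exI)
    apply simp
    done
  show "comm_monoid (poly_ring V)"
    apply (rule comm_monoidI)
    apply (simp_all add: poly_ring_carrier vars_mult_le mult.assoc)
    done
  show "\<And>x y z. (x \<oplus>\<^bsub>poly_ring V\<^esub> y) \<otimes>\<^bsub>poly_ring V\<^esub> z =
      x \<otimes>\<^bsub>poly_ring V\<^esub> z \<oplus>\<^bsub>poly_ring V\<^esub> y \<otimes>\<^bsub>poly_ring V\<^esub> z"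
    by (simp add: distrib_right)
qed

lemma ring_poly_ring: "ring (poly_ring V)"
  using cring_poly_ring cring.axioms(1) by blast

lemma a_inv_poly_ring:
  assumes "x \<in> carrier (poly_ring V)"
  shows "a_inv (poly_ring V) x = - x"
proof -
  interpret R: ring "poly_ring V" by (rule ring_poly_ring)
  have "-x \<in> carrier (poly_ring V)" using assms by (simp add: poly_ring_carrier)
  then show ?thesis using R.minus_equality[of "-x" x] assms by simp
qed

lemma ideal_diff:
  assumes "ideal I (poly_ring V)" "a \<in> I" "b \<in> I"
  shows "a - b \<in> I"
proof -
  interpret ideal I "poly_ring V" by fact
  have "b \<in> carrier (poly_ring V)" using assms(3) a_subset by blast
  then have "a_inv (poly_ring V) b = -b" by (rule a_inv_poly_ring)
  then have "-b \<in> I" using additive_subgroup.a_inv_closed[OF is_additive_subgroup assms(3)] by simp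
  then show ?thesis using additive_subgroup.a_closed[OF is_additive_subgroup assms(2), of "-b"] by simp
qed

lemma ideal_add:
  assumes "ideal I (poly_ring V)" "a \<in> I" "b \<in> I"
  shows "a + b \<in> I"
proof -
  interpret ideal I "poly_ring V" by fact
  show ?thesis using additive_subgroup.a_closed[OF is_additive_subgroup assms(2,3)] by simp
qed

lemma ideal_zero:
  assumes "ideal I (poly_ring V)" shows "0 \<in> I"
proof -
  interpret ideal I "poly_ring V" by fact
  show ?thesis using additive_subgroup.zero_closed[OF is_additive_subgroup] by simp
qed

lemma ideal_lmult:
  assumes "ideal I (poly_ring V)" "a \<in> I" "c \<in> carrier (poly_ring V)"
  shows "c * a \<in> I"
proof -
  interpret ideal I "poly_ring V" by fact
  show ?thesis using I_l_closed[OF assms(2,3)] by simp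
qed

lemma ideal_sum:
  assumes "ideal I (poly_ring V)" "\<And>a. a \<in> A \<Longrightarrow> f a \<in> I"
  shows "sum f A \<in> I"
  using assms(2)
  by (induction A rule: infinite_finite_induct) (auto intro: ideal_add[OF assms(1)] ideal_zero[OF assms(1)])

lemma ideal_mult_cong:
  assumes I: "ideal I (poly_ring V)" and "a - a' \<in> I" "b - b' \<in> I"
    and "a \<in> carrier (poly_ring V)" "b' \<in> carrier (poly_ring V)"
  shows "a * b - a' * b' \<in> I"
proof -
  have "a * b - a' * b' = a * (b - b') + b' * (a - a')" by (simp add: algebra_simps)
  moreover have "a * (b - b') \<in> I" "b' * (a - a') \<in> I"
    using assms ideal_lmult[OF I] by auto
  ultimately show ?thesis using ideal_add[OF I] by simp
qed

lemma ideal_prod_cong: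
  assumes I: "ideal I (poly_ring V)"
    and "\<And>a. a \<in> A \<Longrightarrow> f a - g a \<in> I \<and> f a \<in> carrier (poly_ring V) \<and> g a \<in> carrier (poly_ring V)"
  shows "prod f A - prod g A \<in> I \<and> prod f A \<in> carrier (poly_ring V) \<and> prod g A \<in> carrier (poly_ring V)"
  using assms(2)
proof (induction A rule: infinite_finite_induct)
  case (infinite A) then show ?case using ideal_zero[OF I] by (simp add: poly_ring_carrier)
next
  case empty then show ?case using ideal_zero[OF I] by (simp add: poly_ring_carrier)
next
  case (insert x F)
  then have IH: "prod f F - prod g F \<in> I" "prod f F \<in> carrier (poly_ring V)" "prod g F \<in> carrier (poly_ring V)"
    and x: "f x - g x \<in> I" "f x \<in> carrier (poly_ring V)" "g x \<in> carrier (poly_ring V)" by auto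
  have "f x * prod f F - g x * prod g F \<in> I"
    by (rule ideal_mult_cong[OF I x(1) IH(1) x(2) IH(3)])
  moreover have "f x * prod f F \<in> carrier (poly_ring V)" "g x * prod g F \<in> carrier (poly_ring V)"
    using IH x vars_mult[of "f x" "prod f F"] vars_mult[of "g x" "prod g F"] by (auto simp: poly_ring_carrier)
  ultimately show ?case using insert by simp
qed

lemma ideal_power_cong:
  assumes I: "ideal I (poly_ring V)" and ab: "a - b \<in> I" "a \<in> carrier (poly_ring V)" "b \<in> carrier (poly_ring V)"
  shows "a ^ n - b ^ n \<in> I \<and> a ^ n \<in> carrier (poly_ring V) \<and> b ^ n \<in> carrier (poly_ring V)"
proof (induction n)
  case 0
  then show ?case using ideal_zero[OF I] by (simp add: poly_ring_carrier)
next
  case (Suc n)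
  then have IH: "a ^ n - b ^ n \<in> I" "a ^ n \<in> carrier (poly_ring V)" "b ^ n \<in> carrier (poly_ring V)" by auto
  have "a * a ^ n - b * b ^ n \<in> I"
    by (rule ideal_mult_cong[OF I ab(1) IH(1) ab(2) IH(3)])
  moreover have "a * a ^ n \<in> carrier (poly_ring V)" "b * b ^ n \<in> carrier (poly_ring V)"
    using IH ab by (simp_all add: poly_ring_carrier vars_mult_le)
  ultimately show ?case by simp
qed

lemma ideal_ev_cong:
  assumes I: "ideal I (poly_ring V)" and x: "x \<in> carrier (poly_ring V)"
    and g: "\<And>v. v \<in> vars x \<Longrightarrow> mvar v - g v \<in> I \<and> g v \<in> carrier (poly_ring V)"
  shows "x - ev g x \<in> I"
proof -
  have "x - ev g x = ev mvar x - ev g x" by (simp only: ev_mvar_id)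
  also have "\<dots> = (\<Sum>\<mu>\<in>Poly_Mapping.keys x. Poly_Mapping.single 0 (Poly_Mapping.lookup x \<mu>) * mon mvar \<mu>
       - Poly_Mapping.single 0 (Poly_Mapping.lookup x \<mu>) * mon g \<mu>)"
    by (simp only: ev_def sum_subtractf)
  also have "\<dots> = (\<Sum>\<mu>\<in>Poly_Mapping.keys x. Poly_Mapping.single 0 (Poly_Mapping.lookup x \<mu>) * (mon mvar \<mu> - mon g \<mu>))"
    by (simp only: right_diff_distrib)
  also have "\<dots> \<in> I"
  proof (rule ideal_sum[OF I], rule ideal_lmult[OF I])
    fix \<mu> assume \<mu>: "\<mu> \<in> Poly_Mapping.keys x"
    show "Poly_Mapping.single 0 (Poly_Mapping.lookup x \<mu>) \<in> carrier (poly_ring V)"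
      by (simp add: poly_ring_carrier)
    have "\<And>v. v \<in> Poly_Mapping.keys \<mu> \<Longrightarrow> mvar v ^ Poly_Mapping.lookup \<mu> v - g v ^ Poly_Mapping.lookup \<mu> v \<in> I
       \<and> mvar v ^ Poly_Mapping.lookup \<mu> v \<in> carrier (poly_ring V) \<and> g v ^ Poly_Mapping.lookup \<mu> v \<in> carrier (poly_ring V)"
    proof -
      fix v assume "v \<in> Poly_Mapping.keys \<mu>"
      then have "v \<in> vars x" using \<mu> by (auto simp: vars_def)
      then have gv: "mvar v - g v \<in> I" "g v \<in> carrier (poly_ring V)" and mv: "mvar v \<in> carrier (poly_ring V)"
        using g x by (auto simp: poly_ring_carrier)
      show "?thesis v" by (rule ideal_power_cong[OF I gv(1) mv gv(2)])
    qed
    then have "prod (\<lambda>v. mvar v ^ Poly_Mapping.lookup \<mu> v) (Poly_Mapping.keys \<mu>) - prod (\<lambda>v. g v ^ Poly_Mapping.lookup \<mu> v) (Poly_Mapping.keys \<mu>) \<in> I"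
      using ideal_prod_cong[OF I, of "Poly_Mapping.keys \<mu>" "\<lambda>v. mvar v ^ Poly_Mapping.lookup \<mu> v" "\<lambda>v. g v ^ Poly_Mapping.lookup \<mu> v"] by blast
    then show "mon mvar \<mu> - mon g \<mu> \<in> I" by (simp only: mon_def)
  qed
  finally show ?thesis .
qed



lemma coeff_Pr: "Polynomial.coeff (Pr r) j = (if 1 \<le> j \<and> j \<le> r then mvar j else 0)"
  by (simp add: Pr_def coeff_sum Polynomial.coeff_monom)

lemma Qval_0: "Qval r 0 i = (if i = 0 then 1 else 0)"
  by (simp add: Qval_def)

lemma Qval_1: "Qval r 1 i = Polynomial.coeff (Pr r) i"
  by (simp add: Qval_def)

lemma Qval_Suc: "Qval r (Suc k) i = (\<Sum>j\<le>i. Polynomial.coeff (Pr r) j * Qval r k (i - j))"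
  by (simp add: Qval_def coeff_mult)

lemma Qval_add: "Qval r (p + q) l = (\<Sum>j\<le>l. Qval r p j * Qval r q (l - j))"
  by (simp add: Qval_def power_add coeff_mult)

lemma Qval_low: "i < k \<Longrightarrow> Qval r k i = 0"
proof (induction k arbitrary: i)
  case 0 then show ?case by simp
next
  case (Suc k)
  have H: "\<forall>j\<in>{..i}. Polynomial.coeff (Pr r) j * Qval r k (i - j) = 0"
  proof
    fix j assume "j \<in> {..i}"
    then have that: "j \<le> i" by simp
    show "Polynomial.coeff (Pr r) j * Qval r k (i - j) = 0"
  proof (cases "j = 0")
    case True then show ?thesis by (simp add: coeff_Pr)
  next
    case False then have "i - j < k" using Suc.prems that by linarith
    then show ?thesis using Suc.IH by simp
  qed
  qed
  then show ?case unfolding Qval_Suc by (rule sum.neutral)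
qed

lemma sum_ends:
  fixes f :: "nat \<Rightarrow> 'a::comm_monoid_add"
  assumes "f 0 = 0" "f i = 0"
  shows "(\<Sum>j\<le>i. f j) = (\<Sum>j\<in>{1..<i}. f j)"
proof (rule sum.mono_neutral_right)
  show "\<forall>j\<in>{..i} - {1..<i}. f j = 0"
  proof
    fix j assume "j \<in> {..i} - {1..<i}"
    then have "j = 0 \<or> j = i" by auto
    then show "f j = 0" using assms by auto
  qed
qed auto

lemma Qval_Suc':
  assumes "1 \<le> k" "i \<le> r"
  shows "Qval r (Suc k) i = (\<Sum>j\<in>{1..<i}. mvar j * Qval r k (i - j))"
proof -
  have "Qval r (Suc k) i = (\<Sum>j\<in>{1..<i}. Polynomial.coeff (Pr r) j * Qval r k (i - j))"
    unfolding Qval_Suc by (rule sum_ends) (use assms in \<open>simp_all add: coeff_Pr Qval_low\<close>)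
  also have "\<dots> = (\<Sum>j\<in>{1..<i}. mvar j * Qval r k (i - j))"
    by (rule sum.cong) (use assms in \<open>auto simp: coeff_Pr\<close>)
  finally show ?thesis .
qed

lemma vars_coeff_Pr: "vars (Polynomial.coeff (Pr r) j) \<subseteq> {1..r}"
  by (simp add: coeff_Pr)

lemma vars_Qval: "vars (Qval r k i) \<subseteq> {1..r}"
proof (induction k arbitrary: i)
  case 0 then show ?case by (simp add: Qval_0)
next
  case (Suc k)
  have "vars (Qval r (Suc k) i) \<subseteq> (\<Union>j\<in>{..i}. vars (Polynomial.coeff (Pr r) j * Qval r k (i - j)))"
    unfolding Qval_Suc by (rule vars_sum)
  also have "\<dots> \<subseteq> {1..r}"
  proof (rule UN_least)
    fix j
    show "vars (Polynomial.coeff (Pr r) j * Qval r k (i - j)) \<subseteq> {1..r}"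
      using vars_mult[of "Polynomial.coeff (Pr r) j" "Qval r k (i - j)"] vars_coeff_Pr[of r j] Suc.IH[of "i-j"]
      by blast
  qed
  finally show ?case .
qed

definition Phi :: "nat \<Rightarrow> (nat \<times> nat) mp \<Rightarrow> nat mp" where
  "Phi r = ev (\<lambda>v. Qval r (fst v) (snd v))"

definition Psi :: "nat mp \<Rightarrow> (nat \<times> nat) mp" where
  "Psi = ev (\<lambda>i. mvar (1, i))"

lemma Phi_mvar: "Phi r (mvar (k, i)) = Qval r k i"
  by (simp add: Phi_def)

lemma Phi_mult: "Phi r (p * q) = Phi r p * Phi r q" by (simp add: Phi_def ev_mult)
lemma Phi_add: "Phi r (p + q) = Phi r p + Phi r q" by (simp add: Phi_def ev_add)
lemma Phi_one: "Phi r 1 = 1" by (simp add: Phi_def)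

lemma vars_Phi: "vars (Phi r p) \<subseteq> {1..r}"
  unfolding Phi_def using vars_ev[of "\<lambda>v. Qval r (fst v) (snd v)" p] vars_Qval[of r] by blast

lemma Phi_carrier: "Phi r p \<in> carrier (tring r)"
  using vars_Phi by (simp add: poly_ring_carrier)

lemma Phi_hom: "Phi r \<in> ring_hom (Tring r) (tring r)"
  by (rule ring_hom_memI) (simp_all only: Phi_carrier poly_ring_simps Phi_mult Phi_add Phi_one)

lemma Phi_rhr: "ring_hom_ring (Tring r) (tring r) (Phi r)"
  by (rule ring_hom_ringI2[OF ring_poly_ring ring_poly_ring Phi_hom])

lemma vars_Psi: "vars (Psi q) \<subseteq> {1} \<times> vars q"
proof -
  have "vars (Psi q) \<subseteq> (\<Union>v\<in>vars q. vars (mvar (1::nat, v)))"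
    unfolding Psi_def by (rule vars_ev)
  also have "\<dots> \<subseteq> {1} \<times> vars q" by auto
  finally show ?thesis .
qed

lemma Psi_carrier:
  assumes "1 \<le> r" "vars q \<subseteq> {1..r}"
  shows "Psi q \<in> carrier (Tring r)"
  using vars_Psi[of q] assms by (auto simp: poly_ring_carrier)

lemma Phi_Psi:
  assumes "p \<in> carrier (tring r)"
  shows "Phi r (Psi p) = p"
proof -
  have "Phi r (Psi p) = ev (\<lambda>v. Qval r 1 v) p"
    by (simp add: Phi_def Psi_def ev_comp)
  also have "\<dots> = ev mvar p"
  proof (rule ev_cong)
    fix v assume "v \<in> vars p"
    then have "v \<in> {1..r}" using assms by (auto simp: poly_ring_carrier)
    then show "Qval r 1 v = mvar v" using Qval_1[of r v] by (simp add: coeff_Pr)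
  qed
  finally show ?thesis by (simp add: ev_mvar_id)
qed

lemma Phi_surj:
  assumes "1 \<le> r"
  shows "Phi r ` carrier (Tring r) = carrier (tring r)"
proof
  show "Phi r ` carrier (Tring r) \<subseteq> carrier (tring r)" using Phi_carrier by blast
  show "carrier (tring r) \<subseteq> Phi r ` carrier (Tring r)"
  proof
    fix p assume p: "p \<in> carrier (tring r)"
    then have "Psi p \<in> carrier (Tring r)" using assms by (intro Psi_carrier) (auto simp: poly_ring_carrier)
    then show "p \<in> Phi r ` carrier (Tring r)" using Phi_Psi[OF p] by force
  qed
qed



lemma vars_diff_le: "vars p \<subseteq> V \<Longrightarrow> vars q \<subseteq> V \<Longrightarrow> vars (p - q) \<subseteq> V"
  using vars_diff[of p q] by (rule subset_trans) simp

lemma Tgens_carrier: "Tgens r \<subseteq> carrier (Tring r)"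
proof
  fix g assume "g \<in> Tgens r"
  then consider "g = mvar (0,0) - 1" | k where "g = mvar (0,k)" "k \<le> r" | k where "g = mvar (k,0)" "k \<le> r"
    | i k where "g = mvar (i,k)" "i \<le> r" "k < i"
    | s l p q where "g = mvar (s,l) - (\<Sum>i\<in>{1..<l}. mvar (p,i) * mvar (q,l-i))"
        "s \<le> r" "l \<le> r" "0 < p" "0 < q" "p + q = s"
    unfolding Tgens_def by blast
  then show "g \<in> carrier (Tring r)"
  proof cases
    case 1
    have "vars (mvar (0::nat,0::nat) - 1) \<subseteq> {(0,0)}" using vars_diff[of "mvar (0::nat,0::nat)" 1] by simp
    moreover have "{(0::nat,0::nat)} \<subseteq> {0..r} \<times> {0..r}" by simp
    ultimately have "vars (mvar (0::nat,0::nat) - 1) \<subseteq> {0..r} \<times> {0..r}" by (rule subset_trans)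
    then show ?thesis using 1 by (simp add: poly_ring_carrier)
  next
    case 2 then show ?thesis by (simp add: poly_ring_carrier)
  next
    case 3 then show ?thesis by (simp add: poly_ring_carrier)
  next
    case 4 then show ?thesis by (simp add: poly_ring_carrier)
  next
    case (5 s l p q)
    have "vars (\<Sum>i\<in>{1..<l}. mvar (p,i) * mvar (q,l-i)) \<subseteq> (\<Union>i\<in>{1..<l}. vars (mvar (p,i) * mvar (q,l-i)))"
      by (rule vars_sum)
    also have "\<dots> \<subseteq> {0..r} \<times> {0..r}"
    proof (rule UN_least)
      fix i assume "i \<in> {1..<l}"
      then show "vars (mvar (p,i) * mvar (q,l-i)) \<subseteq> {0..r} \<times> {0..r}"
        using vars_mult[of "mvar (p,i)" "mvar (q,l-i)"] 5 by auto
    qed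
    finally have "vars (\<Sum>i\<in>{1..<l}. mvar (p,i) * mvar (q,l-i)) \<subseteq> {0..r} \<times> {0..r}" .
    moreover have "vars (mvar (s,l)) \<subseteq> {0..r} \<times> {0..r}" using 5 by simp
    ultimately have "vars (mvar (s,l) - (\<Sum>i\<in>{1..<l}. mvar (p,i) * mvar (q,l-i))) \<subseteq> {0..r} \<times> {0..r}"
      by (intro vars_diff_le)
    then show ?thesis using 5(1) by (simp add: poly_ring_carrier)
  qed
qed

lemma Phi_diff: "Phi r (p - q) = Phi r p - Phi r q" by (simp add: Phi_def ev_diff)
lemma Phi_sum: "Phi r (sum f A) = (\<Sum>a\<in>A. Phi r (f a))" by (simp add: Phi_def ev_sum)

lemma Tgens_kernel:
  assumes "g \<in> Tgens r" shows "Phi r g = 0"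
proof -
  from assms consider "g = mvar (0,0) - 1" | k where "g = mvar (0,k)" "0 < k" | k where "g = mvar (k,0)" "0 < k"
    | i k where "g = mvar (i,k)" "k < i"
    | s l p q where "g = mvar (s,l) - (\<Sum>i\<in>{1..<l}. mvar (p,i) * mvar (q,l-i))"
        "0 < p" "0 < q" "p + q = s"
    unfolding Tgens_def by blast
  then show ?thesis
  proof cases
    case 1 then show ?thesis by (simp add: Phi_diff Phi_mvar Phi_one Qval_0)
  next
    case 2 then show ?thesis by (simp add: Phi_mvar Qval_0)
  next
    case 3 then show ?thesis by (simp add: Phi_mvar Qval_low)
  next
    case 4 then show ?thesis by (simp add: Phi_mvar Qval_low)
  next
    case (5 s l p q)
    have "Qval r s l = (\<Sum>j\<le>l. Qval r p j * Qval r q (l - j))"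
      using Qval_add[of r p q l] 5 by simp
    also have "\<dots> = (\<Sum>j\<in>{1..<l}. Qval r p j * Qval r q (l - j))"
      by (rule sum_ends) (use 5 in \<open>simp_all add: Qval_low\<close>)
    finally show ?thesis using 5 by (simp add: Phi_diff Phi_sum Phi_mult Phi_mvar)
  qed
qed

lemma Pideal_ideal: "ideal (Pideal r) (Tring r)"
  unfolding Pideal_def by (rule ring.genideal_ideal[OF ring_poly_ring Tgens_carrier])

lemma Tgens_Pideal: "g \<in> Tgens r \<Longrightarrow> g \<in> Pideal r"
  unfolding Pideal_def using ring.genideal_self[OF ring_poly_ring Tgens_carrier] by blast

lemma Psi_Qval_carrier: "1 \<le> r \<Longrightarrow> Psi (Qval r k i) \<in> carrier (Tring r)"
  by (rule Psi_carrier[OF _ vars_Qval])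

lemma Psi_mult: "Psi (p * q) = Psi p * Psi q" by (simp add: Psi_def ev_mult)
lemma Psi_sum: "Psi (sum f A) = (\<Sum>a\<in>A. Psi (f a))" by (simp add: Psi_def ev_sum)

lemma key_cong:
  assumes r: "1 \<le> r"
  shows "k \<le> r \<Longrightarrow> i \<le> r \<Longrightarrow> mvar (k, i) - Psi (Qval r k i) \<in> Pideal r"
proof (induction k arbitrary: i)
  case 0
  show ?case
  proof (cases "i = 0")
    case True
    then have "mvar (0, i) - Psi (Qval r 0 i) = mvar (0,0) - 1" by (simp add: Qval_0 Psi_def)
    moreover have "mvar (0,0) - 1 \<in> Tgens r" unfolding Tgens_def by blast
    ultimately show ?thesis using Tgens_Pideal by simp
  next
    case False
    then have "mvar (0, i) - Psi (Qval r 0 i) = mvar (0,i)" by (simp add: Qval_0 Psi_def)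
    moreover have "mvar (0,i) \<in> Tgens r" unfolding Tgens_def using False 0 by blast
    ultimately show ?thesis using Tgens_Pideal by simp
  qed
next
  case (Suc k)
  show ?case
  proof (cases "k = 0")
    case True
    show ?thesis
    proof (cases "i = 0")
      case i0: True
      then have "mvar (Suc k, i) - Psi (Qval r (Suc k) i) = mvar (1,0)"
        using True Qval_1[of r 0] by (simp add: coeff_Pr Psi_def)
      moreover have "mvar (1,0) \<in> Tgens r" unfolding Tgens_def using r by blast
      ultimately show ?thesis using Tgens_Pideal by simp
    next
      case False
      then have "mvar (Suc k, i) - Psi (Qval r (Suc k) i) = 0"
        using True Suc.prems Qval_1[of r i] by (simp add: coeff_Pr Psi_def)
      then show ?thesis using ideal_zero[OF Pideal_ideal] by simp
    qed
  next
    case False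
    then have k1: "1 \<le> k" by simp
    have "Psi (Qval r (Suc k) i) = (\<Sum>j\<in>{1..<i}. mvar (1,j) * Psi (Qval r k (i - j)))"
      using Qval_Suc'[OF k1 Suc.prems(2)] by (simp add: Psi_sum Psi_mult) (simp add: Psi_def)
    then have eq: "mvar (Suc k, i) - Psi (Qval r (Suc k) i) =
       (mvar (Suc k, i) - (\<Sum>j\<in>{1..<i}. mvar (1,j) * mvar (k, i - j)))
       + (\<Sum>j\<in>{1..<i}. mvar (1,j) * (mvar (k, i - j) - Psi (Qval r k (i - j))))"
      by (simp add: right_diff_distrib sum_subtractf)
    have g: "mvar (Suc k, i) - (\<Sum>j\<in>{1..<i}. mvar (1,j) * mvar (k, i - j)) \<in> Tgens r"
      unfolding Tgens_def using Suc.prems k1 by (intro UnI2 CollectI exI[of _ "Suc k"] exI[of _ i] exI[of _ 1] exI[of _ k]) auto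
    have s: "(\<Sum>j\<in>{1..<i}. mvar (1,j) * (mvar (k, i - j) - Psi (Qval r k (i - j)))) \<in> Pideal r"
    proof (rule ideal_sum[OF Pideal_ideal], rule ideal_lmult[OF Pideal_ideal])
      fix j assume "j \<in> {1..<i}"
      then show "mvar (k, i - j) - Psi (Qval r k (i - j)) \<in> Pideal r" "mvar (1,j) \<in> carrier (Tring r)"
        using Suc.IH Suc.prems r by (auto simp: poly_ring_carrier)
    qed
    show ?thesis unfolding eq by (rule ideal_add[OF Pideal_ideal Tgens_Pideal[OF g] s])
  qed
qed

lemma kernel_eq:
  assumes r: "1 \<le> r"
  shows "a_kernel (Tring r) (tring r) (Phi r) = Pideal r"
proof
  interpret H: ring_hom_ring "Tring r" "tring r" "Phi r" by (rule Phi_rhr)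
  show "Pideal r \<subseteq> a_kernel (Tring r) (tring r) (Phi r)"
    unfolding Pideal_def
  proof (rule ring.genideal_minimal[OF ring_poly_ring H.kernel_is_ideal])
    show "Tgens r \<subseteq> a_kernel (Tring r) (tring r) (Phi r)"
      using Tgens_carrier Tgens_kernel unfolding a_kernel_def' by auto
  qed
  show "a_kernel (Tring r) (tring r) (Phi r) \<subseteq> Pideal r"
  proof
    fix x assume "x \<in> a_kernel (Tring r) (tring r) (Phi r)"
    then have x: "x \<in> carrier (Tring r)" "Phi r x = 0" unfolding a_kernel_def' by auto
    have "x - ev (\<lambda>v. Psi (Qval r (fst v) (snd v))) x \<in> Pideal r"
    proof (rule ideal_ev_cong[OF Pideal_ideal x(1)])
      fix v assume "v \<in> vars x"
      then have "fst v \<le> r" "snd v \<le> r" using x(1) by (auto simp: poly_ring_carrier)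
      then show "mvar v - Psi (Qval r (fst v) (snd v)) \<in> Pideal r \<and> Psi (Qval r (fst v) (snd v)) \<in> carrier (Tring r)"
        using key_cong[OF r, of "fst v" "snd v"] Psi_Qval_carrier[OF r] by simp
    qed
    moreover have "ev (\<lambda>v. Psi (Qval r (fst v) (snd v))) x = Psi (Phi r x)"
      by (simp add: Phi_def Psi_def ev_comp)
    ultimately show "x \<in> Pideal r" using x(2) by (simp add: Psi_def)
  qed
qed

lemma part2:
  assumes r: "1 \<le> r"
  shows "\<exists>Q. Q \<in> ring_iso (Tring r Quot Pideal r) (tring r)
             \<and> (\<forall>i\<in>{1..r}. Q (Pideal r +>\<^bsub>Tring r\<^esub> mvar (1, i)) = mvar i)
             \<and> (\<forall>k\<le>r. \<forall>i\<le>r. Q (Pideal r +>\<^bsub>Tring r\<^esub> mvar (k, i)) = Qval r k i)"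
proof -
  interpret H: ring_hom_ring "Tring r" "tring r" "Phi r" by (rule Phi_rhr)
  let ?Q = "\<lambda>X. the_elem (Phi r ` X)"
  have iso: "?Q \<in> ring_iso (Tring r Quot Pideal r) (tring r)"
    using H.FactRing_iso_set[OF Phi_surj[OF r]] kernel_eq[OF r] by simp
  have val: "?Q (Pideal r +>\<^bsub>Tring r\<^esub> mvar (k, i)) = Qval r k i" if "k \<le> r" "i \<le> r" for k i
  proof -
    have "mvar (k, i) \<in> carrier (Tring r)" using that by (simp add: poly_ring_carrier)
    then have "?Q (a_kernel (Tring r) (tring r) (Phi r) +>\<^bsub>Tring r\<^esub> mvar (k, i)) = Phi r (mvar (k, i))"
      by (rule H.the_elem_simp)
    then show ?thesis using kernel_eq[OF r] by (simp add: Phi_mvar)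
  qed
  have "\<forall>i\<in>{1..r}. ?Q (Pideal r +>\<^bsub>Tring r\<^esub> mvar (1, i)) = mvar i"
  proof
    fix i :: nat assume i: "i \<in> {1..r}"
    then have "?Q (Pideal r +>\<^bsub>Tring r\<^esub> mvar (1, i)) = Qval r 1 i" using val r by simp
    also have "\<dots> = mvar i" using i Qval_1[of r i] by (simp add: coeff_Pr)
    finally show "?Q (Pideal r +>\<^bsub>Tring r\<^esub> mvar (1, i)) = mvar i" .
  qed
  then show ?thesis using iso val by blast
qed



lemma Bmat_eval: "Bmat r T i a b k' a' b' = (if k' \<le> r \<and> a' = a \<and> b' = b then T i k' else 0)"
proof -
  have "Bmat r T i a b k' a' b' = (\<Sum>j\<le>r. if j = k' then (if a' = a \<and> b' = b then T i j else 0) else 0)"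
    unfolding Bmat_def Acoord_def by (intro sum.cong) auto
  also have "\<dots> = (if k' \<le> r \<and> a' = a \<and> b' = b then T i k' else 0)"
    by (simp add: sum.delta')
  finally show ?thesis .
qed

definition Ef :: "nat \<Rightarrow> nat \<Rightarrow> nat \<Rightarrow> nat \<Rightarrow> nat \<Rightarrow> nat \<Rightarrow> complex" where
  "Ef a b c d a' b' = (if b = c \<and> a' = a \<and> b' = d then 1 else 0) - (if a = d \<and> a' = c \<and> b' = b then 1 else 0)"

lemma lp_gen_eval: "lp_gen r i j a b c d k' a' b' = (if i + j \<le> r \<and> k' = i + j then Ef a b c d a' b' else 0)"
  by (auto simp: lp_gen_def comm_Pi_entry_def Acoord_def Ef_def)

lemma comm_Pi_Bmat: "comm_Pi_entry (Bmat r T n) a b c d k' a' b' = (if k' \<le> r then T n k' else 0) * Ef a b c d a' b'"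
  by (auto simp: comm_Pi_entry_def Bmat_eval Ef_def)

definition Sc :: "(nat \<Rightarrow> nat \<Rightarrow> complex) \<Rightarrow> nat \<Rightarrow> nat \<Rightarrow> nat \<Rightarrow> complex" where
  "Sc T i j k = (\<Sum>i'\<le>k. T i i' * T j (k - i'))"

lemma sum_delta_lt:
  fixes g :: "nat \<Rightarrow> complex"
  assumes "a < m"
  shows "(\<Sum>x<m. (if x = a then 1 else 0) * g x) = g a"
proof -
  have "(\<Sum>x<m. (if x = a then 1 else 0) * g x) = (\<Sum>x<m. if x = a then g x else 0)"
    by (intro sum.cong) auto
  also have "\<dots> = g a" using assms by (simp add: sum.delta)
  finally show ?thesis .
qed

lemma conv_sum:
  fixes f :: "nat \<Rightarrow> nat \<Rightarrow> complex"
  assumes "k \<le> r"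
  shows "(\<Sum>i'\<le>r. \<Sum>j'\<le>r. if i' + j' = k then f i' j' else 0) = (\<Sum>i'\<le>k. f i' (k - i'))"
proof -
  have "(\<Sum>i'\<le>r. \<Sum>j'\<le>r. if i' + j' = k then f i' j' else 0) = (\<Sum>i'\<le>r. if i' \<le> k then f i' (k - i') else 0)"
  proof (rule sum.cong[OF refl])
    fix i' assume "i' \<in> {..r}"
    have "(\<Sum>j'\<le>r. if i' + j' = k then f i' j' else 0) = (\<Sum>j'\<le>r. if j' = k - i' \<and> i' \<le> k then f i' j' else 0)"
      by (intro sum.cong) auto
    also have "\<dots> = (if i' \<le> k then f i' (k - i') else 0)"
      using assms by (cases "i' \<le> k") (simp_all add: sum.delta')
    finally show "(\<Sum>j'\<le>r. if i' + j' = k then f i' j' else 0) = (if i' \<le> k then f i' (k - i') else 0)" .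
  qed
  also have "\<dots> = (\<Sum>i'\<in>{..r} \<inter> {i'. i' \<le> k}. f i' (k - i'))"
    by (simp add: sum.inter_restrict)
  also have "{..r} \<inter> {i'. i' \<le> k} = {..k}" using assms by auto
  finally show ?thesis .
qed

lemma lp_bracket_Bmat:
  assumes "a < m" "b < m" "c < m" "d < m"
  shows "lp_bracket r m (Bmat r T i a b) (Bmat r T j c d) k' a' b' =
    (if k' \<le> r then Sc T i j k' else 0) * Ef a b c d a' b'"
proof -
  have step: "(\<Sum>a1<m. \<Sum>b1<m. \<Sum>c1<m. \<Sum>d1<m.
        Bmat r T i a b i' a1 b1 * Bmat r T j c d j' c1 d1 * lp_gen r i' j' a1 b1 c1 d1 k' a' b')
      = T i i' * T j j' * lp_gen r i' j' a b c d k' a' b'" if "i' \<le> r" "j' \<le> r" for i' j'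
  proof -
    have "(\<Sum>a1<m. \<Sum>b1<m. \<Sum>c1<m. \<Sum>d1<m.
        Bmat r T i a b i' a1 b1 * Bmat r T j c d j' c1 d1 * lp_gen r i' j' a1 b1 c1 d1 k' a' b')
      = (\<Sum>a1<m. (if a1 = a then 1 else 0) * (\<Sum>b1<m. (if b1 = b then 1 else 0) * (\<Sum>c1<m. (if c1 = c then 1 else 0) *
          (\<Sum>d1<m. (if d1 = d then 1 else 0) * (T i i' * T j j' * lp_gen r i' j' a1 b1 c1 d1 k' a' b')))))"
      unfolding Bmat_eval sum_distrib_left using that by (intro sum.cong refl) auto
    also have "\<dots> = T i i' * T j j' * lp_gen r i' j' a b c d k' a' b'"
      using assms by (simp add: sum_delta_lt)
    finally show ?thesis .
  qed
  have "lp_bracket r m (Bmat r T i a b) (Bmat r T j c d) k' a' b' =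
     (\<Sum>i'\<le>r. \<Sum>j'\<le>r. T i i' * T j j' * lp_gen r i' j' a b c d k' a' b')"
    unfolding lp_bracket_def using step by (intro sum.cong refl) auto
  also have "\<dots> = (\<Sum>i'\<le>r. \<Sum>j'\<le>r. if i' + j' = k' then (if k' \<le> r then T i i' * T j j' * Ef a b c d a' b' else 0) else 0)"
    by (intro sum.cong refl) (auto simp: lp_gen_eval)
  also have "\<dots> = (if k' \<le> r then Sc T i j k' else 0) * Ef a b c d a' b'"
  proof (cases "k' \<le> r")
    case True
    then show ?thesis by (simp add: conv_sum Sc_def sum_distrib_right)
  next
    case False
    then have "\<And>i' j'. (if i' + j' = k' then (if k' \<le> r then T i i' * T j j' * Ef a b c d a' b' else 0) else 0) = 0"
      by auto
    then show ?thesis using False by simp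
  qed
  finally show ?thesis .
qed

definition Cond :: "nat \<Rightarrow> (nat \<Rightarrow> nat \<Rightarrow> complex) \<Rightarrow> bool" where
  "Cond r T \<longleftrightarrow> (\<forall>i\<le>r. \<forall>j\<le>r. \<forall>k\<le>r. Sc T i j k = (if i + j \<le> r then T (i + j) k else 0))"

lemma takiff_Bmat_iff:
  assumes "2 \<le> m"
  shows "takiff_rel r m (Bmat r T) \<longleftrightarrow> Cond r T"
proof
  assume H: "takiff_rel r m (Bmat r T)"
  show "Cond r T" unfolding Cond_def
  proof (intro allI impI)
    fix i j k assume ijk: "i \<le> r" "j \<le> r" "k \<le> r"
    have "lp_bracket r m (Bmat r T i 0 1) (Bmat r T j 1 1) =
      (if i + j \<le> r then comm_Pi_entry (Bmat r T (i + j)) 0 1 1 1 else (\<lambda>_ _ _. 0))"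
      using H ijk assms unfolding takiff_rel_def by auto
    then have "lp_bracket r m (Bmat r T i 0 1) (Bmat r T j 1 1) k 0 1 =
      (if i + j \<le> r then comm_Pi_entry (Bmat r T (i + j)) 0 1 1 1 k 0 1 else 0)"
      by simp
    then show "Sc T i j k = (if i + j \<le> r then T (i + j) k else 0)"
      using assms ijk by (simp add: lp_bracket_Bmat comm_Pi_Bmat Ef_def)
  qed
next
  assume C: "Cond r T"
  show "takiff_rel r m (Bmat r T)" unfolding takiff_rel_def
  proof (intro allI impI ext)
    fix i j a b c d k' a' b'
    assume "i \<le> r" "j \<le> r" "a < m" "b < m" "c < m" "d < m"
    then show "lp_bracket r m (Bmat r T i a b) (Bmat r T j c d) k' a' b' =
      (if i + j \<le> r then comm_Pi_entry (Bmat r T (i + j)) a b c d else (\<lambda>_ _ _. 0)) k' a' b'"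
      using C unfolding Cond_def by (auto simp: lp_bracket_Bmat comm_Pi_Bmat)
  qed
qed



lemma Cond_imp_T_cond:
  assumes C: "Cond r T" and nz: "\<exists>i\<le>r. \<exists>j\<le>r. T i j \<noteq> 0" and r1: "1 \<le> r"
  shows "T_cond r T"
proof -
  have C': "Sc T i j k = (if i + j \<le> r then T (i + j) k else 0)" if "i \<le> r" "j \<le> r" "k \<le> r" for i j k
    using C that unfolding Cond_def by blast
  have T00: "T 0 0 \<noteq> 0"
  proof
    assume z: "T 0 0 = 0"
    have T0: "T 0 k = 0" if "k \<le> r" for k
      using that
    proof (induction k rule: less_induct)
      case (less k)
      have "T 0 k = Sc T 0 0 k" using C'[of 0 0 k] less.prems by simp
      also have "\<dots> = 0" unfolding Sc_def
      proof (rule sum.neutral, rule ballI)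
        fix i' assume "i' \<in> {..k}"
        then show "T 0 i' * T 0 (k - i') = 0"
          using less z by (cases "i' < k") auto
      qed
      finally show ?case .
    qed
    have "T i k = 0" if "i \<le> r" "k \<le> r" for i k
    proof -
      have "T i k = Sc T 0 i k" using C'[of 0 i k] that by simp
      also have "\<dots> = 0" unfolding Sc_def using T0 that by (intro sum.neutral ballI) auto
      finally show ?thesis .
    qed
    moreover obtain i j where "i \<le> r" "j \<le> r" "T i j \<noteq> 0" using nz by blast
    ultimately show False by simp
  qed
  have "T 0 0 * T 0 0 = T 0 0" using C'[of 0 0 0] by (simp add: Sc_def)
  then have T00': "T 0 0 = 1" using T00 by (metis mult_cancel_right2)
  have T0k: "T 0 k = 0" if "0 < k" "k \<le> r" for k
    using that
  proof (induction k rule: less_induct)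
    case (less k)
    have "T 0 k = Sc T 0 0 k" using C'[of 0 0 k] less.prems by simp
    also have "\<dots> = T 0 0 * T 0 k + T 0 k * T 0 0 + (\<Sum>i'\<in>{1..<k}. T 0 i' * T 0 (k - i'))"
    proof -
      have "{..k} = insert 0 (insert k {1..<k})" using less.prems by auto
      then show ?thesis unfolding Sc_def using less.prems by (simp add: add.assoc)
    qed
    also have "(\<Sum>i'\<in>{1..<k}. T 0 i' * T 0 (k - i')) = 0"
      using less by (intro sum.neutral ballI) auto
    finally have "T 0 k = 2 * T 0 k" using T00' by simp
    then show ?case by simp
  qed
  have Tn0: "T n 0 = T 1 0 ^ n" if "1 \<le> n" "n \<le> r" for n
    using that
  proof (induction n rule: dec_induct)
    case base then show ?case by simp
  next
    case (step n)
    have "T (1 + n) 0 = Sc T 1 n 0" using C'[of 1 n 0] step by simp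
    then show ?case using step by (simp add: Sc_def)
  qed
  have "T 1 0 * T r 0 = 0" using C'[of 1 r 0] r1 by (simp add: Sc_def)
  then have "T 1 0 ^ Suc r = 0" using Tn0[of r] r1 by simp
  then have T10: "T 1 0 = 0" by (rule power_eq_0_iff[THEN iffD1, THEN conjunct1])
  have Tk0: "T k 0 = 0" if "0 < k" "k \<le> r" for k
    using Tn0[of k] that T10 by simp
  have low: "T i k = 0" if "i \<le> r" "k < i" for i k
    using that
  proof (induction i arbitrary: k)
    case 0 then show ?case by simp
  next
    case (Suc n)
    have "T (Suc n) k = Sc T 1 n k" using C'[of 1 n k] Suc.prems r1 by simp
    also have "\<dots> = 0" unfolding Sc_def
    proof (rule sum.neutral, rule ballI)
      fix i' assume i'k: "i' \<in> {..k}"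
      show "T 1 i' * T n (k - i') = 0"
      proof (cases "i' = 0")
        case True then show ?thesis using T10 by simp
      next
        case False
        moreover have "i' \<le> k" using i'k by simp
        ultimately have "k - i' < n" using Suc.prems(2) by linarith
        then show ?thesis using Suc.IH[of "k - i'"] Suc.prems by simp
      qed
    qed
    finally show ?case .
  qed
  have last: "T s l = (\<Sum>i\<in>{1..<l}. T p i * T q (l - i))"
    if "s \<le> r" "l \<le> r" "0 < p" "0 < q" "p + q = s" for s l p q
  proof -
    have "T s l = Sc T p q l" using C'[of p q l] that by simp
    also have "\<dots> = (\<Sum>i\<in>{1..<l}. T p i * T q (l - i))"
      unfolding Sc_def by (rule sum_ends) (use that Tk0 in auto)
    finally show ?thesis .
  qed
  show ?thesis unfolding T_cond_def
  proof (intro conjI allI impI)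
    show "T 0 0 = 1" by (rule T00')
  next
    fix k assume "0 < k \<and> k \<le> r" then show "T 0 k = 0" using T0k by simp
  next
    fix k assume "0 < k \<and> k \<le> r" then show "T k 0 = 0" using Tk0 by simp
  next
    fix i k assume "i \<le> r \<and> k < i" then show "T i k = 0" using low by simp
  next
    fix s l p q assume "s \<le> r \<and> l \<le> r \<and> 0 < p \<and> 0 < q \<and> p + q = s"
    then show "T s l = (\<Sum>i\<in>{1..<l}. T p i * T q (l - i))" using last by simp
  qed
qed

lemma T_cond_imp_Cond:
  assumes TC: "T_cond r T"
  shows "Cond r T"
  unfolding Cond_def
proof (intro allI impI)
  fix i j k assume ijk: "i \<le> r" "j \<le> r" "k \<le> r"
  have T00: "T 0 0 = 1" and T0k: "\<And>k. 0 < k \<Longrightarrow> k \<le> r \<Longrightarrow> T 0 k = 0"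
    and Tk0: "\<And>k. 0 < k \<Longrightarrow> k \<le> r \<Longrightarrow> T k 0 = 0"
    and low: "\<And>i k. i \<le> r \<Longrightarrow> k < i \<Longrightarrow> T i k = 0"
    and last: "\<And>s l p q. s \<le> r \<Longrightarrow> l \<le> r \<Longrightarrow> 0 < p \<Longrightarrow> 0 < q \<Longrightarrow> p + q = s \<Longrightarrow>
        T s l = (\<Sum>i\<in>{1..<l}. T p i * T q (l - i))"
    using TC unfolding T_cond_def by blast+
  show "Sc T i j k = (if i + j \<le> r then T (i + j) k else 0)"
  proof (cases "i = 0")
    case True
    have "Sc T i j k = T 0 0 * T j k + (\<Sum>i'\<in>{..k} - {0}. T 0 i' * T j (k - i'))"
      unfolding Sc_def True by (subst sum.remove[of _ 0]) auto
    also have "(\<Sum>i'\<in>{..k} - {0}. T 0 i' * T j (k - i')) = 0"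
      using ijk T0k by (intro sum.neutral ballI) auto
    finally show ?thesis using True T00 ijk by simp
  next
    case i0: False
    show ?thesis
    proof (cases "j = 0")
      case True
      have "Sc T i j k = T i k * T 0 0 + (\<Sum>i'\<in>{..k} - {k}. T i i' * T 0 (k - i'))"
        unfolding Sc_def True by (subst sum.remove[of _ k]) auto
      also have "(\<Sum>i'\<in>{..k} - {k}. T i i' * T 0 (k - i')) = 0"
        using ijk T0k by (intro sum.neutral ballI) auto
      finally show ?thesis using True T00 ijk by simp
    next
      case j0: False
      show ?thesis
      proof (cases "i + j \<le> r")
        case True
        have "Sc T i j k = (\<Sum>i'\<in>{1..<k}. T i i' * T j (k - i'))"
          unfolding Sc_def by (rule sum_ends) (use i0 j0 ijk Tk0 in auto)
        also have "\<dots> = T (i + j) k" using last[of "i+j" k i j] True ijk i0 j0 by simp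
        finally show ?thesis using True by simp
      next
        case False
        have "Sc T i j k = 0" unfolding Sc_def
        proof (rule sum.neutral, rule ballI)
          fix i' assume i': "i' \<in> {..k}"
          show "T i i' * T j (k - i') = 0"
          proof (cases "i' < i")
            case True then show ?thesis using low[of i i'] ijk by simp
          next
            case False
            then have "k - i' < j" using i' ijk \<open>\<not> i + j \<le> r\<close> by auto
            then show ?thesis using low[of j "k - i'"] ijk by simp
          qed
        qed
        then show ?thesis using False by simp
      qed
    qed
  qed
qed


theorem theorem2p7:
  fixes m r :: nat and T :: "nat \<Rightarrow> nat \<Rightarrow> complex"
  assumes "2 \<le> m" and "1 \<le> r"
    and "\<exists>i\<le>r. \<exists>j\<le>r. T i j \<noteq> 0"
    and "takiff_rel r m Acoord"
  shows "(takiff_rel r m (Bmat r T) \<longleftrightarrow> T_cond r T)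
       \<and> (\<exists>Q. Q \<in> ring_iso (Tring r Quot Pideal r) (tring r)
             \<and> (\<forall>i\<in>{1..r}. Q (Pideal r +>\<^bsub>Tring r\<^esub> mvar (1, i)) = mvar i)
             \<and> (\<forall>k\<le>r. \<forall>i\<le>r. Q (Pideal r +>\<^bsub>Tring r\<^esub> mvar (k, i)) = Qval r k i))"
proof (rule conjI)
  show "takiff_rel r m (Bmat r T) \<longleftrightarrow> T_cond r T"
  proof
    assume "takiff_rel r m (Bmat r T)"
    then have "Cond r T" using takiff_Bmat_iff[OF assms(1)] by simp
    then show "T_cond r T" by (rule Cond_imp_T_cond[OF _ assms(3) assms(2)])
  next
    assume "T_cond r T"
    then have "Cond r T" by (rule T_cond_imp_Cond)
    then show "takiff_rel r m (Bmat r T)" using takiff_Bmat_iff[OF assms(1)] by simp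
  qed
  show "\<exists>Q. Q \<in> ring_iso (Tring r Quot Pideal r) (tring r)
             \<and> (\<forall>i\<in>{1..r}. Q (Pideal r +>\<^bsub>Tring r\<^esub> mvar (1, i)) = mvar i)
             \<and> (\<forall>k\<le>r. \<forall>i\<le>r. Q (Pideal r +>\<^bsub>Tring r\<^esub> mvar (k, i)) = Qval r k i)"
    by (rule part2[OF assms(2)])
qed

end
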